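(* Let $\mathcal{H}_A,\mathcal{H}_B$ be finite-dimensional Hilbert spaces, let $Q_A$ and $Q_B$ be Hermitian operators on $\mathcal{H}_A$ and $\mathcal{H}_B$ respectively, and let $O\neq 0$ be an operator on $\mathcal{H}_A\otimes\mathcal{H}_B$ satisfying $[Q_A\otimes\mathbb{1}+\mathbb{1}\otimes Q_B,\,O]=0$. Then there exists a symmetry-resolved operator Schmidt decomposition $$\frac{O}{\sqrt{\mathrm{Tr}(O^\dagger O)}}=\sum_q\sum_j\lambda_j^{(q)}\,O_{A,j}^{(q)}\otimes O_{B,j}^{(-q)},$$ where $q$ ranges over eigenvalues of the linear map $X\mapsto[Q_A,X]$ on $\mathrm{End}(\mathcal{H}_A)$, $\lambda_j^{(q)}\ge0$, $\mathrm{Tr}\big((O_{A,j}^{(q)})^\dagger O_{A,j'}^{(q')}\big)=\delta_{q,q'}\delta_{j,j'}$, $\mathrm{Tr}\big((O_{B,j}^{(q)})^\dagger O_{B,j'}^{(q')}\big)=\delta_{q,q'}\delta_{j,j'}$, and $[Q_A,O_{A,j}^{(q)}]=q\,O_{A,j}^{(q)}$, $[Q_B,O_{B,j}^{(q)}]=q\,O_{B,j}^{(q)}$. *)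

theory Defs
  imports "HOL-Analysis.Analysis"
begin

text \<open>Operators on a finite-dimensional Hilbert space with orthonormal basis indexed by
  the finite type 'a are complex matrices of type complex^'a^'a.\<close>

type_synonym 'a op = "complex^'a^'a"

definition adj :: "'a::finite op \<Rightarrow> 'a op" where
  "adj A = (\<chi> i j. cnj (A $ j $ i))"

definition hermitian :: "'a::finite op \<Rightarrow> bool" where
  "hermitian A \<longleftrightarrow> adj A = A"

definition cscale :: "complex \<Rightarrow> 'a::finite op \<Rightarrow> 'a op" where
  "cscale c A = (\<chi> i j. c * A $ i $ j)"

definition commutator :: "'a::finite op \<Rightarrow> 'a op \<Rightarrow> 'a op" where
  "commutator X Y = X ** Y - Y ** X"

text \<open>Tensor (Kronecker) product: H_A \<otimes> H_B has basis indexed by 'a \<times> 'b.\<close>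
definition kron :: "'a::finite op \<Rightarrow> 'b::finite op \<Rightarrow> ('a \<times> 'b) op" where
  "kron A B = (\<chi> r c. A $ fst r $ fst c * B $ snd r $ snd c)"

definition ad_eigenvalue :: "'a::finite op \<Rightarrow> complex \<Rightarrow> bool" where
  "ad_eigenvalue Q q \<longleftrightarrow> (\<exists>X. X \<noteq> 0 \<and> commutator Q X = cscale q X)"

end

theory Submission
  imports Defs
begin

lemma quad_zero:
  fixes a D :: real
  assumes "\<forall>t. 2*t*a \<le> t^2*D"
  shows "a = 0"
proof (rule ccontr)
  assume a: "a \<noteq> 0"
  define t where "t = a / (\<bar>D\<bar> + 1)"
  have pos: "\<bar>D\<bar> + 1 > 0" by simp
  have h: "2*t*a \<le> t^2*D" using assms by blast
  define E where "E = \<bar>D\<bar> + 1"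
  have Epos: "E > 0" unfolding E_def by simp
  have "2*t*a*E^2 \<le> t^2*D*E^2" using h by (simp add: mult_right_mono)
  moreover have "2*t*a*E^2 = a*a*(2*E)" unfolding t_def E_def[symmetric] using Epos
    by (simp add: power2_eq_square field_simps)
  moreover have "t^2*D*E^2 = a*a*D" unfolding t_def E_def[symmetric] using Epos
    by (simp add: power2_eq_square field_simps)
  ultimately have "a*a*(2*(\<bar>D\<bar>+1)) \<le> a*a*D" unfolding E_def by simp
  moreover have "a*a > 0" using a by (metis mult_pos_pos mult_neg_neg linorder_neqE_linordered_idom)
  ultimately have "2*(\<bar>D\<bar>+1) \<le> D" using mult_le_cancel_left_pos by blast
  thus False by (simp add: abs_if split: if_splits)
qed

lemma real_eig:
  fixes f :: "'v::euclidean_space \<Rightarrow> 'v"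
  assumes S: "subspace S" and nz: "S \<noteq> {0}" and lf: "linear f"
    and sym: "\<And>x y. inner x (f y) = inner (f x) y" and inv: "f ` S \<subseteq> S"
  shows "\<exists>x\<in>S. norm x = 1 \<and> (\<exists>c. f x = c *\<^sub>R x)"
proof -
  define K where "K = S \<inter> sphere 0 1"
  have "closed S" using S by (rule closed_subspace)
  hence cK: "compact K" unfolding K_def by (simp add: compact_Int_closed closed_Int_compact)
  obtain y where y: "y \<in> S" "y \<noteq> 0" using nz S subspace_0 by blast
  have "(1 / norm y) *\<^sub>R y \<in> K" unfolding K_def using y S by (simp add: subspace_scale)
  hence neK: "K \<noteq> {}" by blast
  have bl: "bounded_linear f" using lf linear_conv_bounded_linear by blast
  have "continuous_on K (\<lambda>x. inner x (f x))"
    by (intro continuous_intros bounded_linear.continuous_on[OF bl])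
  then obtain x where xK: "x \<in> K" and xmax: "\<forall>z\<in>K. inner z (f z) \<le> inner x (f x)"
    using continuous_attains_sup[OF cK neK] by blast
  have xS: "x \<in> S" and nx: "norm x = 1" using xK unfolding K_def by auto
  define c where "c = inner x (f x)"
  define y where "y = f x - c *\<^sub>R x"
  have yS: "y \<in> S" unfolding y_def using xS inv S by (simp add: subspace_diff subspace_scale image_subset_iff)
  have xx: "inner x x = 1" using nx by (simp add: dot_square_norm)
  have xy: "inner x y = 0" unfolding y_def c_def by (simp add: inner_diff_right xx)
  define a where "a = inner y (f x)"
  define b where "b = inner y (f y)"
  have ineq: "2*t*a \<le> t^2*(c * inner y y - b)" for t
  proof -
    define z where "z = x + t *\<^sub>R y"
    have zS: "z \<in> S" unfolding z_def using xS yS S by (simp add: subspace_add subspace_scale)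
    have nz2: "inner z z = 1 + t^2 * inner y y"
      unfolding z_def by (simp add: inner_add_left inner_add_right xx xy inner_commute power2_eq_square)
    have zpos: "norm z > 0" using nz2
      by (smt (verit, best) inner_ge_zero mult_nonneg_nonneg norm_eq_zero norm_ge_zero inner_zero_left zero_le_power2)
    have "(1 / norm z) *\<^sub>R z \<in> K" unfolding K_def using zS S zpos by (simp add: subspace_scale)
    hence "inner ((1 / norm z) *\<^sub>R z) (f ((1 / norm z) *\<^sub>R z)) \<le> c" using xmax c_def by blast
    hence "inner z (f z) / (norm z)^2 \<le> c"
      using lf by (simp add: linear_cmul power2_eq_square)
    hence le: "inner z (f z) \<le> c * inner z z"
      using zpos by (simp add: divide_le_eq dot_square_norm mult.commute)
    have "inner z (f z) = c + 2*t*a + t^2*b"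
      unfolding z_def a_def b_def c_def using lf sym[of y x] sym[of x y]
      by (simp add: linear_add linear_cmul inner_add_left inner_add_right power2_eq_square algebra_simps inner_commute)
    thus ?thesis using le nz2 by (simp add: algebra_simps)
  qed
  have a0: "a = 0" using ineq quad_zero by blast
  have "inner y y = inner y (f x) - c * inner y x" unfolding y_def by (simp add: inner_diff_right)
  also have "\<dots> = 0" using a0 xy unfolding a_def by (simp add: inner_commute)
  finally have "y = 0" by simp
  hence "f x = c *\<^sub>R x" unfolding y_def by simp
  thus ?thesis using xS nx by blast
qed

lemma common_eig:
  fixes f g :: "'v::euclidean_space \<Rightarrow> 'v"
  assumes S: "subspace S" and nz: "S \<noteq> {0}" and lf: "linear f" and lg: "linear g"
    and symf: "\<And>x y. inner x (f y) = inner (f x) y"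
    and symg: "\<And>x y. inner x (g y) = inner (g x) y"
    and invf: "f ` S \<subseteq> S" and invg: "g ` S \<subseteq> S" and comm: "\<And>x. f (g x) = g (f x)"
  shows "\<exists>x\<in>S. norm x = 1 \<and> (\<exists>a. f x = a *\<^sub>R x) \<and> (\<exists>b. g x = b *\<^sub>R x)"
proof -
  obtain x0 a where x0: "x0 \<in> S" "norm x0 = 1" "f x0 = a *\<^sub>R x0"
    using real_eig[OF S nz lf symf invf] by blast
  define E where "E = {y\<in>S. f y = a *\<^sub>R y}"
  have sE: "subspace E" unfolding E_def subspace_def using S lf
    by (auto simp: subspace_add subspace_scale subspace_0 linear_add linear_cmul linear_0 scaleR_add_right)
  have "x0 \<in> E" "x0 \<noteq> 0" using x0 unfolding E_def by auto
  hence nE: "E \<noteq> {0}" by blast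
  have iE: "g ` E \<subseteq> E" unfolding E_def using invg comm lg by (auto simp: linear_cmul)
  obtain x b where "x \<in> E" "norm x = 1" "g x = b *\<^sub>R x"
    using real_eig[OF sE nE lg symg iE] by blast
  thus ?thesis unfolding E_def by blast
qed


definition hs :: "'n::finite op \<Rightarrow> 'n op \<Rightarrow> complex" where
  "hs X Y = (\<Sum>i\<in>UNIV. \<Sum>j\<in>UNIV. cnj (X$i$j) * Y$i$j)"

lemma hs_add_right: "hs X (Y + Z) = hs X Y + hs X Z"
  by (simp add: hs_def algebra_simps sum.distrib)
lemma hs_add_left: "hs (Y + Z) X = hs Y X + hs Z X"
  by (simp add: hs_def algebra_simps sum.distrib)
lemma hs_diff_right: "hs X (Y - Z) = hs X Y - hs X Z"
  by (simp add: hs_def algebra_simps sum_subtractf)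
lemma hs_diff_left: "hs (Y - Z) X = hs Y X - hs Z X"
  by (simp add: hs_def algebra_simps sum_subtractf)
lemma hs_minus_right: "hs X (- Y) = - hs X Y"
  by (simp add: hs_def sum_negf)
lemma hs_minus_left: "hs (- Y) X = - hs Y X"
  by (simp add: hs_def sum_negf)
lemma scaleR_entry: "(r *\<^sub>R Y) $ i $ j = complex_of_real r * (Y::'n::finite op) $ i $ j"
  unfolding vector_scaleR_component by (simp add: scaleR_conv_of_real)
lemma hs_scaleR_right: "hs X (r *\<^sub>R Y) = of_real r * hs X Y"
  by (simp only: hs_def scaleR_entry) (simp add: sum_distrib_left algebra_simps)
lemma hs_scaleR_left: "hs (r *\<^sub>R X) Y = of_real r * hs X Y"
  by (simp only: hs_def scaleR_entry) (simp add: sum_distrib_left algebra_simps)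
lemma hs_cscale_right: "hs X (cscale c Y) = c * hs X Y"
  by (simp add: hs_def cscale_def sum_distrib_left algebra_simps)
lemma hs_cscale_left: "hs (cscale c X) Y = cnj c * hs X Y"
  by (simp add: hs_def cscale_def sum_distrib_left algebra_simps)
lemma hs_sum_right: "hs X (sum f A) = (\<Sum>a\<in>A. hs X (f a))"
  by (simp add: hs_def sum_distrib_left sum.swap[of _ A])
lemma hs_zero_right[simp]: "hs X 0 = 0" by (simp add: hs_def)
lemma hs_zero_left[simp]: "hs 0 X = 0" by (simp add: hs_def)
lemma hs_cnj: "cnj (hs X Y) = hs Y X"
  by (simp add: hs_def mult.commute)
lemma Re_hs: "Re (hs X Y) = inner X Y"
  by (simp add: hs_def inner_vec_def inner_complex_def Re_sum)
lemma Im_hs_self: "Im (hs X X) = 0"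
  by (simp add: hs_def Im_sum)
lemma hs_self: "hs X X = of_real ((norm X)^2)"
  by (rule complex_eqI) (simp_all add: Re_hs Im_hs_self dot_square_norm[symmetric])
lemma hs_self_eq_0: "hs X X = 0 \<longleftrightarrow> X = 0"
  by (simp add: hs_self)

lemma spectral:
  fixes f g :: "'n::finite op \<Rightarrow> 'n op"
  assumes lf: "linear f" and lg: "linear g"
    and hf: "\<And>x y. hs x (f y) = hs (f x) y" and hg: "\<And>x y. hs x (g y) = hs (g x) y"
    and comm: "\<And>x. f (g x) = g (f x)"
  shows "\<exists>F. finite F \<and> (\<forall>x\<in>F. \<forall>y\<in>F. hs x y = (if x = y then 1 else 0)) \<and>
     (\<forall>x\<in>F. (\<exists>a. f x = a *\<^sub>R x) \<and> (\<exists>b. g x = b *\<^sub>R x)) \<and>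
     (\<forall>y. y = (\<Sum>x\<in>F. cscale (hs x y) x))"
proof -
  define P where "P F \<longleftrightarrow> finite F \<and> (\<forall>x\<in>F. \<forall>y\<in>F. hs x y = (if x = y then 1 else 0)) \<and>
     (\<forall>x\<in>F. (\<exists>a. f x = a *\<^sub>R x) \<and> (\<exists>b. g x = b *\<^sub>R x))" for F
  have bound: "card F \<le> DIM('n op)" if "P F" for F
  proof -
    have po: "pairwise orthogonal F" using that unfolding P_def pairwise_def orthogonal_def
      by (metis Re_hs zero_complex.simps(1))
    have "0 \<notin> F" using that unfolding P_def by fastforce
    hence "independent F" using po pairwise_orthogonal_independent by blast
    thus ?thesis using independent_bound by blast
  qed
  have P0: "P {}" unfolding P_def by simp
  have ex0: "\<exists>F. P F \<and> card F = 0" using P0 by (intro exI[of _ "{}"]) simp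
  have bd: "\<forall>y. (\<exists>F. P F \<and> card F = y) \<longrightarrow> y \<le> DIM('n op)" using bound by blast
  obtain k where k: "\<exists>F. P F \<and> card F = k" and kmax: "\<forall>k'. (\<exists>F. P F \<and> card F = k') \<longrightarrow> k' \<le> k"
    using Nat.ex_has_greatest_nat[where P="\<lambda>k. \<exists>F. P F \<and> card F = k", OF ex0 bd] by blast
  obtain F where PF: "P F" and cF: "card F = k" using k by blast
  have finF: "finite F" and onF: "\<forall>x\<in>F. \<forall>y\<in>F. hs x y = (if x = y then 1 else 0)"
    and eF: "\<forall>x\<in>F. (\<exists>a. f x = a *\<^sub>R x) \<and> (\<exists>b. g x = b *\<^sub>R x)" using PF unfolding P_def by blast+
  define S where "S = {y. \<forall>x\<in>F. hs x y = 0}"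
  have sS: "subspace S" unfolding subspace_def S_def
    by (simp add: hs_add_right hs_scaleR_right)
  have iSf: "f ` S \<subseteq> S"
  proof (rule image_subsetI)
    fix y assume yS: "y \<in> S"
    have "hs x (f y) = 0" if xF: "x \<in> F" for x
    proof -
      obtain a where fx: "f x = a *\<^sub>R x" using eF xF by blast
      have "hs x y = 0" using yS xF unfolding S_def by blast
      hence "hs (a *\<^sub>R x) y = 0" by (simp only: hs_scaleR_left mult_zero_right)
      thus ?thesis by (simp only: fx[symmetric] hf)
    qed
    thus "f y \<in> S" unfolding S_def by blast
  qed
  have iSg: "g ` S \<subseteq> S"
  proof (rule image_subsetI)
    fix y assume yS: "y \<in> S"
    have "hs x (g y) = 0" if xF: "x \<in> F" for x
    proof -
      obtain a where fx: "g x = a *\<^sub>R x" using eF xF by blast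
      have "hs x y = 0" using yS xF unfolding S_def by blast
      hence "hs (a *\<^sub>R x) y = 0" by (simp only: hs_scaleR_left mult_zero_right)
      thus ?thesis by (simp only: fx[symmetric] hg)
    qed
    thus "g y \<in> S" unfolding S_def by blast
  qed
  have S0: "S = {0}"
  proof (rule ccontr)
    assume "S \<noteq> {0}"
    then obtain z where zS: "z \<in> S" and nz: "norm z = 1" and ez: "(\<exists>a. f z = a *\<^sub>R z) \<and> (\<exists>b. g z = b *\<^sub>R z)"
      using common_eig[OF sS _ lf lg _ _ iSf iSg comm] hf hg Re_hs by metis
    have zz: "hs z z = 1" using nz by (simp add: hs_self)
    have zF: "z \<notin> F" using zS zz unfolding S_def by force
    have "P (insert z F)" unfolding P_def using finF onF eF ez zz zS unfolding S_def
      by (auto, metis hs_cnj complex_cnj_zero)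
    hence "card (insert z F) \<le> k" using kmax by blast
    thus False using zF finF cF by simp
  qed
  have "y = (\<Sum>x\<in>F. cscale (hs x y) x)" for y
  proof -
    have "y - (\<Sum>x\<in>F. cscale (hs x y) x) \<in> S"
      unfolding S_def
    proof (intro CollectI ballI)
      fix x' assume x': "x' \<in> F"
      have "hs x' (\<Sum>x\<in>F. cscale (hs x y) x) = (\<Sum>x\<in>F. hs x y * (if x' = x then 1 else 0))"
        using onF x' by (simp add: hs_sum_right hs_cscale_right)
      also have "\<dots> = hs x' y" using x' finF by (simp add: if_distrib cong: if_cong)
      finally show "hs x' (y - (\<Sum>x\<in>F. cscale (hs x y) x)) = 0" by (simp add: hs_diff_right)
    qed
    thus ?thesis using S0 by simp
  qed
  thus ?thesis using finF onF eF by blast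
qed

definition conjm :: "'n::finite op \<Rightarrow> 'n op" where
  "conjm X = (\<chi> i j. cnj (X$i$j))"

definition Tm :: "('a::finite \<times> 'b::finite) op \<Rightarrow> 'b op \<Rightarrow> 'a op" where
  "Tm W Y = (\<chi> i j. \<Sum>k\<in>UNIV. \<Sum>l\<in>UNIV. W$(i,k)$(j,l) * Y$k$l)"

definition Td :: "('a::finite \<times> 'b::finite) op \<Rightarrow> 'a op \<Rightarrow> 'b op" where
  "Td W X = (\<chi> k l. \<Sum>i\<in>UNIV. \<Sum>j\<in>UNIV. cnj (W$(i,k)$(j,l)) * X$i$j)"

lemma sum_swap4:
  "(\<Sum>i\<in>A. \<Sum>j\<in>B. \<Sum>k\<in>C. \<Sum>l\<in>D. f i j k l) = (\<Sum>k\<in>C. \<Sum>l\<in>D. \<Sum>i\<in>A. \<Sum>j\<in>B. f i j k l)"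
proof -
  have a: "(\<Sum>j\<in>B. \<Sum>k\<in>C. \<Sum>l\<in>D. f i j k l) = (\<Sum>k\<in>C. \<Sum>l\<in>D. \<Sum>j\<in>B. f i j k l)" for i
  proof -
    have "(\<Sum>j\<in>B. \<Sum>k\<in>C. \<Sum>l\<in>D. f i j k l) = (\<Sum>k\<in>C. \<Sum>j\<in>B. \<Sum>l\<in>D. f i j k l)" by (rule sum.swap)
    also have "\<dots> = (\<Sum>k\<in>C. \<Sum>l\<in>D. \<Sum>j\<in>B. f i j k l)" by (rule sum.cong[OF refl], rule sum.swap)
    finally show ?thesis .
  qed
  have "(\<Sum>i\<in>A. \<Sum>j\<in>B. \<Sum>k\<in>C. \<Sum>l\<in>D. f i j k l) = (\<Sum>i\<in>A. \<Sum>k\<in>C. \<Sum>l\<in>D. \<Sum>j\<in>B. f i j k l)"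
    using a by simp
  also have "\<dots> = (\<Sum>k\<in>C. \<Sum>i\<in>A. \<Sum>l\<in>D. \<Sum>j\<in>B. f i j k l)" by (rule sum.swap)
  also have "\<dots> = (\<Sum>k\<in>C. \<Sum>l\<in>D. \<Sum>i\<in>A. \<Sum>j\<in>B. f i j k l)" by (rule sum.cong[OF refl], rule sum.swap)
  finally show ?thesis .
qed

lemma hs_Tm: "hs X (Tm W Y) = hs (Td W X) Y"
proof -
  have "hs X (Tm W Y) = (\<Sum>i\<in>UNIV. \<Sum>j\<in>UNIV. \<Sum>k\<in>UNIV. \<Sum>l\<in>UNIV. cnj (X$i$j) * W$(i,k)$(j,l) * Y$k$l)"
    by (simp add: hs_def Tm_def sum_distrib_left mult.assoc)
  also have "\<dots> = (\<Sum>k\<in>UNIV. \<Sum>l\<in>UNIV. \<Sum>i\<in>UNIV. \<Sum>j\<in>UNIV. cnj (X$i$j) * W$(i,k)$(j,l) * Y$k$l)"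
    by (rule sum_swap4)
  also have "\<dots> = hs (Td W X) Y"
    by (simp add: hs_def Td_def sum_distrib_right sum_distrib_left mult_ac)
  finally show ?thesis .
qed

lemma sum_UNIV_pair: "(\<Sum>s\<in>(UNIV::('a::finite\<times>'b::finite) set). f s) = (\<Sum>a\<in>UNIV. \<Sum>b\<in>UNIV. f (a,b))"
  by (simp add: UNIV_Times_UNIV[symmetric] sum.cartesian_product del: UNIV_Times_UNIV)

lemma mult_if01: "(a::complex) * (if P then 1 else 0) * b = (if P then a*b else 0)"
  by simp
lemma mult_if01': "(if P then 1 else 0) * (a::complex) = (if P then a else 0)"
  by simp

lemma kronA_mult: "(kron A (mat 1) ** W) $ (i,k) $ c = (\<Sum>i'\<in>UNIV. A$i$i' * W$(i',k)$c)"
proof -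
  have "(kron A (mat 1) ** W) $ (i,k) $ c = (\<Sum>i'\<in>UNIV. \<Sum>k'\<in>UNIV. if k = k' then A$i$i' * W$(i',k')$c else 0)"
    by (simp add: matrix_matrix_mult_def kron_def mat_def sum_UNIV_pair mult_if01)
  also have "\<dots> = (\<Sum>i'\<in>UNIV. A$i$i' * W$(i',k)$c)"
    by simp
  finally show ?thesis .
qed

lemma sum_swap3:
  "(\<Sum>a\<in>A. \<Sum>b\<in>B. \<Sum>c\<in>C. f a b c) = (\<Sum>b\<in>B. \<Sum>c\<in>C. \<Sum>a\<in>A. f a b c)"
proof -
  have "(\<Sum>a\<in>A. \<Sum>b\<in>B. \<Sum>c\<in>C. f a b c) = (\<Sum>b\<in>B. \<Sum>a\<in>A. \<Sum>c\<in>C. f a b c)" by (rule sum.swap)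
  also have "\<dots> = (\<Sum>b\<in>B. \<Sum>c\<in>C. \<Sum>a\<in>A. f a b c)" by (rule sum.cong[OF refl], rule sum.swap)
  finally show ?thesis .
qed

lemma sum_swap3b:
  "(\<Sum>a\<in>A. \<Sum>b\<in>B. \<Sum>c\<in>C. f a b c) = (\<Sum>c\<in>C. \<Sum>b\<in>B. \<Sum>a\<in>A. f a b c)"
proof -
  have "(\<Sum>a\<in>A. \<Sum>b\<in>B. \<Sum>c\<in>C. f a b c) = (\<Sum>b\<in>B. \<Sum>c\<in>C. \<Sum>a\<in>A. f a b c)" by (rule sum_swap3)
  also have "\<dots> = (\<Sum>c\<in>C. \<Sum>b\<in>B. \<Sum>a\<in>A. f a b c)" by (rule sum.swap)
  finally show ?thesis .
qed

lemma kron_A1: "kron A (mat 1) $ (i,k) $ (i',k') = (if k = k' then A$i$i' else 0)"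
  by (simp add: kron_def mat_def)
lemma kron_1B: "kron (mat 1) B $ (i,k) $ (i',k') = (if i = i' then B$k$k' else 0)"
  by (simp add: kron_def mat_def)
lemma if0_mult: "(if P then x else 0) * (y::complex) = (if P then x * y else 0)" by simp
lemma mult_if0: "(y::complex) * (if P then x else 0) = (if P then y * x else 0)" by simp

lemma sum_if_const: "(\<Sum>b\<in>S. if P then g b else 0) = (if P then (\<Sum>b\<in>S. g b) else (0::complex))"
  by simp

lemma kronA_mult_right: "(W ** kron A (mat 1)) $ r $ (j,l) = (\<Sum>j'\<in>UNIV. W$r$(j',l) * A$j'$j)"
  by (simp add: matrix_matrix_mult_def sum_UNIV_pair kron_A1 mult_if0)

lemma kronB_mult: "(kron (mat 1) B ** W) $ (i,k) $ c = (\<Sum>k'\<in>UNIV. B$k$k' * W$(i,k')$c)"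
  by (simp add: matrix_matrix_mult_def sum_UNIV_pair kron_1B if0_mult sum_if_const)

lemma kronB_mult_right: "(W ** kron (mat 1) B) $ r $ (j,l) = (\<Sum>l'\<in>UNIV. W$r$(j,l') * B$l'$l)"
  by (simp add: matrix_matrix_mult_def sum_UNIV_pair kron_1B mult_if0 sum_if_const)

lemma Tm_kA: "Tm (kron A (mat 1) ** W) Y = A ** Tm W Y"
proof -
  have "Tm (kron A (mat 1) ** W) Y $ i $ j = (A ** Tm W Y) $ i $ j" for i j
  proof -
    have "Tm (kron A (mat 1) ** W) Y $ i $ j = (\<Sum>k\<in>UNIV. \<Sum>l\<in>UNIV. \<Sum>i'\<in>UNIV. A$i$i' * W$(i',k)$(j,l) * Y$k$l)"
      by (simp add: Tm_def kronA_mult sum_distrib_right)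
    also have "\<dots> = (\<Sum>i'\<in>UNIV. \<Sum>k\<in>UNIV. \<Sum>l\<in>UNIV. A$i$i' * W$(i',k)$(j,l) * Y$k$l)"
      by (rule sum_swap3[symmetric])
    also have "\<dots> = (A ** Tm W Y) $ i $ j"
      by (simp add: Tm_def matrix_matrix_mult_def sum_distrib_left mult.assoc)
    finally show ?thesis .
  qed
  thus ?thesis by (simp add: vec_eq_iff)
qed

lemma Tm_kA_right: "Tm (W ** kron A (mat 1)) Y = Tm W Y ** A"
proof -
  have "Tm (W ** kron A (mat 1)) Y $ i $ j = (Tm W Y ** A) $ i $ j" for i j
  proof -
    have "Tm (W ** kron A (mat 1)) Y $ i $ j = (\<Sum>k\<in>UNIV. \<Sum>l\<in>UNIV. \<Sum>j'\<in>UNIV. W$(i,k)$(j',l) * Y$k$l * A$j'$j)"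
      by (simp add: Tm_def kronA_mult_right sum_distrib_right sum_distrib_left mult_ac)
    also have "\<dots> = (\<Sum>j'\<in>UNIV. \<Sum>k\<in>UNIV. \<Sum>l\<in>UNIV. W$(i,k)$(j',l) * Y$k$l * A$j'$j)"
      by (rule sum_swap3[symmetric])
    also have "\<dots> = (Tm W Y ** A) $ i $ j"
      by (simp add: Tm_def matrix_matrix_mult_def sum_distrib_right)
    finally show ?thesis .
  qed
  thus ?thesis by (simp add: vec_eq_iff)
qed

lemma Tm_kB: "Tm (kron (mat 1) B ** W) Y = Tm W (transpose B ** Y)"
proof -
  have "Tm (kron (mat 1) B ** W) Y $ i $ j = Tm W (transpose B ** Y) $ i $ j" for i j
  proof -
    have "Tm (kron (mat 1) B ** W) Y $ i $ j = (\<Sum>k\<in>UNIV. \<Sum>l\<in>UNIV. \<Sum>k'\<in>UNIV. B$k$k' * W$(i,k')$(j,l) * Y$k$l)"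
      by (simp add: Tm_def kronB_mult sum_distrib_right)
    also have "\<dots> = (\<Sum>k'\<in>UNIV. \<Sum>l\<in>UNIV. \<Sum>k\<in>UNIV. B$k$k' * W$(i,k')$(j,l) * Y$k$l)"
      by (rule sum_swap3b)
    also have "\<dots> = Tm W (transpose B ** Y) $ i $ j"
      by (simp add: Tm_def matrix_matrix_mult_def transpose_def sum_distrib_left mult_ac)
    finally show ?thesis .
  qed
  thus ?thesis by (simp add: vec_eq_iff)
qed

lemma Tm_kB_right: "Tm (W ** kron (mat 1) B) Y = Tm W (Y ** transpose B)"
proof -
  have "Tm (W ** kron (mat 1) B) Y $ i $ j = Tm W (Y ** transpose B) $ i $ j" for i j
  proof -
    have "Tm (W ** kron (mat 1) B) Y $ i $ j = (\<Sum>k\<in>UNIV. \<Sum>l\<in>UNIV. \<Sum>l'\<in>UNIV. W$(i,k)$(j,l') * B$l'$l * Y$k$l)"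
      by (simp add: Tm_def kronB_mult_right sum_distrib_right)
    also have "\<dots> = (\<Sum>k\<in>UNIV. \<Sum>l'\<in>UNIV. \<Sum>l\<in>UNIV. W$(i,k)$(j,l') * B$l'$l * Y$k$l)"
      by (rule sum.cong[OF refl], rule sum.swap)
    also have "\<dots> = Tm W (Y ** transpose B) $ i $ j"
      by (simp add: Tm_def matrix_matrix_mult_def transpose_def sum_distrib_left mult_ac)
    finally show ?thesis .
  qed
  thus ?thesis by (simp add: vec_eq_iff)
qed


lemma matrix_add_rdistrib': "((B + C) ** A) = (B ** A) + (C ** A)"
  by (vector matrix_matrix_mult_def sum.distrib[symmetric] field_simps)

lemma Tm_add_left: "Tm (W1 + W2) Y = Tm W1 Y + Tm W2 Y"
  by (simp add: Tm_def vec_eq_iff algebra_simps sum.distrib)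
lemma Tm_add_right: "Tm W (Y1 + Y2) = Tm W Y1 + Tm W Y2"
  by (simp add: Tm_def vec_eq_iff algebra_simps sum.distrib)
lemma Tm_diff_right: "Tm W (Y1 - Y2) = Tm W Y1 - Tm W Y2"
  by (simp add: Tm_def vec_eq_iff algebra_simps sum_subtractf)
lemma Tm_minus_right: "Tm W (- Y) = - Tm W Y"
  by (simp add: Tm_def vec_eq_iff sum_negf)
lemma Tm_scaleR_right: "Tm W (r *\<^sub>R Y) = r *\<^sub>R Tm W Y"
  by (simp only: vec_eq_iff scaleR_entry Tm_def vec_lambda_beta) (simp add: sum_distrib_left mult_ac)
lemma Td_add_right: "Td W (Y1 + Y2) = Td W Y1 + Td W Y2"
  by (simp add: Td_def vec_eq_iff algebra_simps sum.distrib)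
lemma Td_minus_right: "Td W (- Y) = - Td W Y"
  by (simp add: Td_def vec_eq_iff sum_negf)
lemma Td_scaleR_right: "Td W (r *\<^sub>R Y) = r *\<^sub>R Td W Y"
  by (simp only: vec_eq_iff scaleR_entry Td_def vec_lambda_beta) (simp add: sum_distrib_left mult_ac)

lemma Tm_intertwine:
  assumes "commutator (kron QA (mat 1) + kron (mat 1) QB) W = 0"
  shows "commutator QA (Tm W Y) = - Tm W (commutator (transpose QB) Y)"
proof -
  have "(kron QA (mat 1) + kron (mat 1) QB) ** W = W ** (kron QA (mat 1) + kron (mat 1) QB)"
    using assms unfolding commutator_def by simp
  hence "kron QA (mat 1) ** W + kron (mat 1) QB ** W = W ** kron QA (mat 1) + W ** kron (mat 1) QB"
    by (simp add: matrix_add_ldistrib matrix_add_rdistrib')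
  hence "Tm (kron QA (mat 1) ** W + kron (mat 1) QB ** W) Y = Tm (W ** kron QA (mat 1) + W ** kron (mat 1) QB) Y"
    by simp
  hence "QA ** Tm W Y + Tm W (transpose QB ** Y) = Tm W Y ** QA + Tm W (Y ** transpose QB)"
    by (simp add: Tm_add_left Tm_kA Tm_kA_right Tm_kB Tm_kB_right)
  hence "QA ** Tm W Y - Tm W Y ** QA = Tm W (Y ** transpose QB) - Tm W (transpose QB ** Y)"
    by (simp add: algebra_simps)
  thus ?thesis unfolding commutator_def by (simp add: Tm_diff_right)
qed

lemma hs_mult_left: "hs X (A ** Y) = hs (adj A ** X) Y"
proof -
  have "hs X (A ** Y) = (\<Sum>i\<in>UNIV. \<Sum>j\<in>UNIV. \<Sum>k\<in>UNIV. cnj (X$i$j) * A$i$k * Y$k$j)"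
    by (simp add: hs_def matrix_matrix_mult_def sum_distrib_left mult.assoc)
  also have "\<dots> = (\<Sum>k\<in>UNIV. \<Sum>j\<in>UNIV. \<Sum>i\<in>UNIV. cnj (X$i$j) * A$i$k * Y$k$j)"
    by (rule sum_swap3b)
  also have "\<dots> = hs (adj A ** X) Y"
    by (simp add: hs_def matrix_matrix_mult_def adj_def sum_distrib_right sum_distrib_left mult_ac)
  finally show ?thesis .
qed

lemma hs_mult_right: "hs X (Y ** A) = hs (X ** adj A) Y"
proof -
  have "hs X (Y ** A) = (\<Sum>i\<in>UNIV. \<Sum>j\<in>UNIV. \<Sum>k\<in>UNIV. cnj (X$i$j) * A$k$j * Y$i$k)"
    by (simp add: hs_def matrix_matrix_mult_def sum_distrib_left mult_ac)
  also have "\<dots> = (\<Sum>i\<in>UNIV. \<Sum>k\<in>UNIV. \<Sum>j\<in>UNIV. cnj (X$i$j) * A$k$j * Y$i$k)"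
    by (rule sum.cong[OF refl], rule sum.swap)
  also have "\<dots> = hs (X ** adj A) Y"
    by (simp add: hs_def matrix_matrix_mult_def adj_def sum_distrib_right sum_distrib_left mult_ac)
  finally show ?thesis .
qed

lemma hs_commutator:
  assumes "adj Q = Q"
  shows "hs X (commutator Q Y) = hs (commutator Q X) Y"
  unfolding commutator_def by (simp only: hs_diff_right hs_diff_left hs_mult_left[of X Q Y] hs_mult_right[of X Y Q] assms)

lemma adj_transpose_herm:
  assumes "hermitian Q" shows "adj (transpose Q) = transpose Q"
proof -
  have h: "cnj (Q $ i $ j) = Q $ j $ i" for i j
    using assms unfolding hermitian_def adj_def by (metis vec_lambda_beta)
  show ?thesis by (simp add: adj_def transpose_def vec_eq_iff h)
qed

lemma conjm_herm:
  assumes "hermitian Q" shows "conjm Q = transpose Q"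
proof -
  have h: "cnj (Q $ i $ j) = Q $ j $ i" for i j
    using assms unfolding hermitian_def adj_def by (metis vec_lambda_beta)
  show ?thesis by (simp add: conjm_def transpose_def vec_eq_iff h)
qed

lemma hs_eqI: "(\<And>Y. hs Y A = hs Y B) \<Longrightarrow> A = B"
proof -
  assume h: "\<And>Y. hs Y A = hs Y B"
  have "hs (A - B) (A - B) = 0" using h[of "A - B"] by (simp add: hs_diff_right)
  thus "A = B" by (simp add: hs_self_eq_0)
qed

lemma Td_intertwine:
  assumes c: "commutator (kron QA (mat 1) + kron (mat 1) QB) W = 0"
    and hA: "hermitian QA" and hB: "hermitian QB"
  shows "Td W (commutator QA X) = - commutator (transpose QB) (Td W X)"
proof (rule hs_eqI)
  fix Y
  have aA: "adj QA = QA" using hA unfolding hermitian_def .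
  have aB: "adj (transpose QB) = transpose QB" using hB by (rule adj_transpose_herm)
  have "hs (Td W (commutator QA X)) Y = hs (commutator QA X) (Tm W Y)" by (simp add: hs_Tm)
  also have "\<dots> = hs X (commutator QA (Tm W Y))" by (simp add: hs_commutator aA)
  also have "\<dots> = - hs X (Tm W (commutator (transpose QB) Y))"
    by (simp add: Tm_intertwine[OF c] hs_minus_right)
  also have "\<dots> = - hs (Td W X) (commutator (transpose QB) Y)" by (simp add: hs_Tm)
  also have "\<dots> = - hs (commutator (transpose QB) (Td W X)) Y" by (simp add: hs_commutator aB)
  also have "\<dots> = hs (- commutator (transpose QB) (Td W X)) Y" by (simp add: hs_minus_left)
  finally have "hs (Td W (commutator QA X)) Y = hs (- commutator (transpose QB) (Td W X)) Y" .
  thus "hs Y (Td W (commutator QA X)) = hs Y (- commutator (transpose QB) (Td W X))"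
    by (metis hs_cnj)
qed


lemma trace_adj_hs: "trace (adj X ** Y) = hs X Y"
proof -
  have "trace (adj X ** Y) = (\<Sum>i\<in>UNIV. \<Sum>k\<in>UNIV. cnj (X$k$i) * Y$k$i)"
    by (simp add: trace_def matrix_matrix_mult_def adj_def)
  also have "\<dots> = hs X Y" unfolding hs_def by (rule sum.swap)
  finally show ?thesis .
qed

lemma cscale_entry: "cscale c X $ i $ j = c * X $ i $ j"
  by (simp add: cscale_def)
lemma scaleR_cscale: "r *\<^sub>R (X::'n::finite op) = cscale (complex_of_real r) X"
  by (simp only: vec_eq_iff cscale_entry scaleR_entry) simp
lemma cscale_cscale: "cscale c (cscale d X) = cscale (c * d) X"
  by (simp add: vec_eq_iff cscale_entry)
lemma cscale_zero[simp]: "cscale c 0 = 0"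
  by (simp add: vec_eq_iff cscale_entry)
lemma cscale_one: "cscale 1 X = X"
  by (simp add: vec_eq_iff cscale_entry)
lemma cscale_minus: "cscale c (- X) = cscale (- c) X"
  by (simp add: vec_eq_iff cscale_entry)
lemma cscale_sum: "cscale c (sum f A) = (\<Sum>a\<in>A. cscale c (f a))"
  by (simp add: vec_eq_iff cscale_entry sum_distrib_left)
lemma kron_cscale_left: "kron (cscale c A) B = cscale c (kron A B)"
  by (simp add: vec_eq_iff cscale_entry kron_def mult.assoc)
lemma kron_zero_left[simp]: "kron 0 B = 0"
  by (simp add: vec_eq_iff kron_def)
lemma commutator_cscale: "commutator Q (cscale c X) = cscale c (commutator Q X)"
  by (simp add: vec_eq_iff cscale_entry commutator_def matrix_matrix_mult_def sum_distrib_left algebra_simps)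
lemma commutator_add: "commutator Q (X + Y) = commutator Q X + commutator Q Y"
  by (simp add: commutator_def matrix_add_ldistrib matrix_add_rdistrib')
lemma commutator_scaleR: "commutator Q (r *\<^sub>R X) = r *\<^sub>R commutator Q X"
  by (simp add: scaleR_cscale commutator_cscale)

lemma conjm_conjm: "conjm (conjm X) = X"
  by (simp add: conjm_def vec_eq_iff)
lemma conjm_mult: "conjm (A ** B) = conjm A ** conjm B"
  by (simp add: conjm_def vec_eq_iff matrix_matrix_mult_def)
lemma conjm_diff: "conjm (A - B) = conjm A - conjm B"
  by (simp add: conjm_def vec_eq_iff)
lemma conjm_commutator: "conjm (commutator Q Y) = commutator (conjm Q) (conjm Y)"
  by (simp add: commutator_def conjm_mult conjm_diff)
lemma conjm_scaleR: "conjm (r *\<^sub>R Y) = r *\<^sub>R conjm Y"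
  by (simp add: conjm_def vec_eq_iff scaleR_entry)
lemma hs_conjm: "hs (conjm X) (conjm Y) = cnj (hs X Y)"
  by (simp add: conjm_def hs_def)

lemma if_and01: "(if a = k \<and> b = l then (1::complex) else 0) = (if a = k then (if b = l then 1 else 0) else 0)"
  by simp

lemma reconstruct:
  fixes W :: "('a::finite \<times> 'b::finite) op"
  assumes fin: "finite F" and exp: "\<And>Y. Y = (\<Sum>g\<in>F. cscale (hs g Y) g)"
  shows "W = (\<Sum>g\<in>F. kron (Tm W g) (conjm g))"
proof -
  have d: "(\<Sum>g\<in>F. g$a$b * cnj (g$k$l)) = (if a = k \<and> b = l then 1 else 0)" for a b k l
  proof -
    define E :: "'b op" where "E = (\<chi> a b. if a = k \<and> b = l then 1 else 0)"
    have hE: "hs g E = cnj (g$k$l)" for g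
    proof -
      have "hs g E = (\<Sum>i\<in>UNIV. \<Sum>j\<in>UNIV. if i = k then (if j = l then cnj (g$i$j) else 0) else 0)"
        unfolding hs_def E_def by (intro sum.cong refl) auto
      thus ?thesis by (simp add: sum_if_const)
    qed
    have "E $ a $ b = (\<Sum>g\<in>F. cscale (hs g E) g) $ a $ b" using exp[of E] by simp
    also have "\<dots> = (\<Sum>g\<in>F. g$a$b * cnj (g$k$l))" by (simp add: cscale_entry hE mult.commute)
    finally show ?thesis unfolding E_def by simp
  qed
  have "W $ (i,k) $ (j,l) = (\<Sum>g\<in>F. kron (Tm W g) (conjm g)) $ (i,k) $ (j,l)" for i k j l
  proof -
    have "(\<Sum>g\<in>F. kron (Tm W g) (conjm g)) $ (i,k) $ (j,l) =
        (\<Sum>g\<in>F. \<Sum>a\<in>UNIV. \<Sum>b\<in>UNIV. W$(i,a)$(j,b) * (g$a$b * cnj (g$k$l)))"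
      by (simp add: kron_def Tm_def conjm_def sum_distrib_right mult.assoc)
    also have "\<dots> = (\<Sum>a\<in>UNIV. \<Sum>b\<in>UNIV. \<Sum>g\<in>F. W$(i,a)$(j,b) * (g$a$b * cnj (g$k$l)))"
      by (rule sum_swap3)
    also have "\<dots> = (\<Sum>a\<in>UNIV. \<Sum>b\<in>UNIV. W$(i,a)$(j,b) * (if a = k \<and> b = l then 1 else 0))"
      by (simp add: sum_distrib_left[symmetric] d)
    also have "\<dots> = W $ (i,k) $ (j,l)"
      by (simp only: if_and01 mult_if0 mult_1_right mult_zero_right sum_if_const) simp
    finally show ?thesis by simp
  qed
  thus ?thesis by (simp add: vec_eq_iff)
qed

theorem proposition4:
  fixes QA :: "'a::finite op" and QB :: "'b::finite op" and Op :: "('a \<times> 'b) op"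
  assumes "hermitian QA" and "hermitian QB" and "Op \<noteq> 0"
    and "commutator (kron QA (mat 1) + kron (mat 1) QB) Op = 0"
  shows "\<exists>(K :: (complex \<times> nat) set) (lam :: complex \<times> nat \<Rightarrow> real) OA OB.
           finite K \<and>
           cscale (complex_of_real (1 / sqrt (Re (trace (adj Op ** Op))))) Op
             = (\<Sum>(q,j)\<in>K. cscale (complex_of_real (lam (q,j))) (kron (OA (q,j)) (OB (-q,j)))) \<and>
           (\<forall>(q,j)\<in>K. ad_eigenvalue QA q \<and> lam (q,j) \<ge> 0) \<and>
           (\<forall>(q,j)\<in>K. \<forall>(q',j')\<in>K.
               trace (adj (OA (q,j)) ** OA (q',j')) = (if q = q' \<and> j = j' then 1 else 0) \<and>
               trace (adj (OB (-q,j)) ** OB (-q',j')) = (if q = q' \<and> j = j' then 1 else 0)) \<and>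
           (\<forall>(q,j)\<in>K. commutator QA (OA (q,j)) = cscale q (OA (q,j)) \<and>
               commutator QB (OB (-q,j)) = cscale (-q) (OB (-q,j)))"
proof -
  note hA = assms(1) and hB = assms(2) and cO = assms(4)
  have aA: "adj QA = QA" using hA unfolding hermitian_def .
  have aB: "adj (transpose QB) = transpose QB" using hB by (rule adj_transpose_herm)
  define M where "M = (\<lambda>Y. Td Op (Tm Op Y))"
  define L where "L = (\<lambda>Y::'b op. commutator (transpose QB) Y)"
  have lM: "linear M"
    by (rule linearI) (simp_all add: M_def Tm_add_right Td_add_right Tm_scaleR_right Td_scaleR_right)
  have lL: "linear L"
    by (rule linearI) (simp_all add: L_def commutator_add commutator_scaleR)
  have hM: "hs X (M Y) = hs (M X) Y" for X Y
  proof -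
    have "hs X (M Y) = cnj (hs (Td Op (Tm Op Y)) X)" by (simp add: M_def hs_cnj)
    also have "\<dots> = cnj (hs (Tm Op Y) (Tm Op X))" by (simp add: hs_Tm)
    also have "\<dots> = hs (Tm Op X) (Tm Op Y)" by (simp add: hs_cnj)
    also have "\<dots> = hs (M X) Y" by (simp add: M_def hs_Tm)
    finally show ?thesis .
  qed
  have hL: "hs X (L Y) = hs (L X) Y" for X Y
    unfolding L_def by (rule hs_commutator[OF aB])
  have comm: "M (L Y) = L (M Y)" for Y
  proof -
    have "Tm Op (L Y) = - commutator QA (Tm Op Y)"
      unfolding L_def using Tm_intertwine[OF cO, of Y] by simp
    hence "M (L Y) = - Td Op (commutator QA (Tm Op Y))" by (simp add: M_def Td_minus_right)
    also have "\<dots> = L (M Y)" by (simp add: Td_intertwine[OF cO hA hB] L_def M_def)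
    finally show ?thesis .
  qed
  obtain F where finF: "finite F" and onF: "\<forall>x\<in>F. \<forall>y\<in>F. hs x y = (if x = y then 1 else 0)"
    and eF: "\<forall>x\<in>F. (\<exists>a. M x = a *\<^sub>R x) \<and> (\<exists>b. L x = b *\<^sub>R x)"
    and expF: "\<forall>y. y = (\<Sum>x\<in>F. cscale (hs x y) x)"
    using spectral[OF lM lL hM hL comm] by blast
  define n where "n = card F"
  obtain e where bij: "bij_betw e {0..<n} F" using ex_bij_betw_nat_finite[OF finF] n_def by blast
  have eF': "e j \<in> F" if "j < n" for j using bij that by (auto simp: bij_betw_def)
  have einj: "e j = e j' \<longleftrightarrow> j = j'" if "j < n" "j' < n" for j j'
    using bij that by (auto simp: bij_betw_def inj_on_def)
  define mu where "mu j = Re (hs (e j) (M (e j)))" for j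
  define pp where "pp j = Re (hs (e j) (L (e j)))" for j
  have ee: "hs (e j) (e j) = 1" if "j < n" for j using onF eF'[OF that] by simp
  have Me: "M (e j) = mu j *\<^sub>R e j" if jn: "j < n" for j
  proof -
    obtain a where a: "M (e j) = a *\<^sub>R e j" using eF eF'[OF jn] by blast
    have "mu j = a" unfolding mu_def a using ee[OF jn] by (simp add: hs_scaleR_right)
    thus ?thesis using a by simp
  qed
  have Le: "L (e j) = pp j *\<^sub>R e j" if jn: "j < n" for j
  proof -
    obtain a where a: "L (e j) = a *\<^sub>R e j" using eF eF'[OF jn] by blast
    have "pp j = a" unfolding pp_def a using ee[OF jn] by (simp add: hs_scaleR_right)
    thus ?thesis using a by simp
  qed
  have hsT: "hs (Tm Op (e j)) (Tm Op (e j')) = (if j = j' then complex_of_real (mu j) else 0)"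
    if "j < n" "j' < n" for j j'
  proof -
    have "hs (Tm Op (e j)) (Tm Op (e j')) = hs (M (e j)) (e j')" by (simp add: hs_Tm M_def)
    also have "\<dots> = complex_of_real (mu j) * hs (e j) (e j')" by (simp add: Me[OF that(1)] hs_scaleR_left)
    also have "\<dots> = (if j = j' then complex_of_real (mu j) else 0)"
      using onF eF'[OF that(1)] eF'[OF that(2)] einj[OF that] by simp
    finally show ?thesis .
  qed
  have mu_norm: "mu j = (norm (Tm Op (e j)))^2" if "j < n" for j
  proof -
    have h1: "hs (Tm Op (e j)) (Tm Op (e j)) = complex_of_real (mu j)" using hsT[OF that that] by simp
    have h2: "hs (Tm Op (e j)) (Tm Op (e j)) = complex_of_real ((norm (Tm Op (e j)))^2)" by (rule hs_self)
    show ?thesis using h1 h2 of_real_eq_iff by metis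
  qed
  have mu_ge: "mu j \<ge> 0" if "j < n" for j using mu_norm[OF that] by simp
  have mu0: "Tm Op (e j) = 0" if "j < n" "\<not> mu j > 0" for j
  proof -
    have "mu j = 0" using mu_ge[OF that(1)] that(2) by simp
    hence "hs (Tm Op (e j)) (Tm Op (e j)) = 0" using hsT[OF that(1) that(1)] by simp
    thus ?thesis by (simp add: hs_self_eq_0)
  qed
  define s where "s = 1 / sqrt (Re (trace (adj Op ** Op)))"
  have s_ge: "s \<ge> 0"
  proof -
    have "Re (trace (adj Op ** Op)) = (norm Op)^2" by (simp add: trace_adj_hs hs_self)
    thus ?thesis unfolding s_def by simp
  qed
  define J where "J = {j \<in> {0..<n}. mu j > 0}"
  define f where "f = (\<lambda>j. (- complex_of_real (pp j), j))"
  define K where "K = f ` J"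
  define lam where "lam = (\<lambda>x::complex \<times> nat. sqrt (mu (snd x)) * s)"
  define OA where "OA = (\<lambda>x::complex \<times> nat. cscale (complex_of_real (1 / sqrt (mu (snd x)))) (Tm Op (e (snd x))))"
  define OB where "OB = (\<lambda>x::complex \<times> nat. conjm (e (snd x)))"
  have Jn: "j < n" if "j \<in> J" for j using that unfolding J_def by simp
  have Jmu: "mu j > 0" if "j \<in> J" for j using that unfolding J_def by simp
  have finK: "finite K" unfolding K_def J_def by simp
  have injf: "inj_on f J" unfolding f_def inj_on_def by simp
  have termeq: "cscale (complex_of_real (lam (f j))) (kron (OA (f j)) (OB (- fst (f j), snd (f j))))
      = cscale (complex_of_real s) (kron (Tm Op (e j)) (conjm (e j)))" if "j \<in> J" for j
  proof -
    have "sqrt (mu j) > 0" using Jmu[OF that] by simp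
    hence "complex_of_real (sqrt (mu j) * s) * complex_of_real (1 / sqrt (mu j)) = complex_of_real s"
      by (simp add: field_simps)
    thus ?thesis unfolding lam_def OA_def OB_def f_def
      by (simp add: kron_cscale_left cscale_cscale)
  qed
  have sumeq: "(\<Sum>(q,j)\<in>K. cscale (complex_of_real (lam (q,j))) (kron (OA (q,j)) (OB (-q,j))))
      = cscale (complex_of_real s) Op"
  proof -
    have "(\<Sum>(q,j)\<in>K. cscale (complex_of_real (lam (q,j))) (kron (OA (q,j)) (OB (-q,j))))
        = (\<Sum>x\<in>K. cscale (complex_of_real (lam x)) (kron (OA x) (OB (- fst x, snd x))))"
      by (simp add: case_prod_beta)
    also have "\<dots> = (\<Sum>j\<in>J. cscale (complex_of_real (lam (f j))) (kron (OA (f j)) (OB (- fst (f j), snd (f j)))))"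
      unfolding K_def by (simp add: sum.reindex[OF injf])
    also have "\<dots> = (\<Sum>j\<in>J. cscale (complex_of_real s) (kron (Tm Op (e j)) (conjm (e j))))"
      by (rule sum.cong[OF refl]) (rule termeq)
    also have "\<dots> = (\<Sum>j\<in>{0..<n}. cscale (complex_of_real s) (kron (Tm Op (e j)) (conjm (e j))))"
      by (rule sum.mono_neutral_left) (auto simp: J_def mu0)
    also have "\<dots> = (\<Sum>g\<in>F. cscale (complex_of_real s) (kron (Tm Op g) (conjm g)))"
      by (rule sum.reindex_bij_betw[OF bij])
    also have "\<dots> = cscale (complex_of_real s) (\<Sum>g\<in>F. kron (Tm Op g) (conjm g))"
      by (simp add: cscale_sum)
    also have "\<dots> = cscale (complex_of_real s) Op"
      using reconstruct[OF finF, of Op] expF by metis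
    finally show ?thesis .
  qed
  have eigA: "commutator QA (OA (f j)) = cscale (fst (f j)) (OA (f j))" if "j \<in> J" for j
  proof -
    have "commutator QA (Tm Op (e j)) = - Tm Op (L (e j))"
      unfolding L_def using Tm_intertwine[OF cO, of "e j"] by simp
    also have "\<dots> = cscale (- complex_of_real (pp j)) (Tm Op (e j))"
    proof -
      have "- Tm Op (L (e j)) = - (pp j *\<^sub>R Tm Op (e j))" by (simp only: Le[OF Jn[OF that]] Tm_scaleR_right)
      also have "\<dots> = cscale (- complex_of_real (pp j)) (Tm Op (e j))"
        by (simp only: scaleR_cscale) (simp add: vec_eq_iff cscale_entry)
      finally show ?thesis .
    qed
    finally have "commutator QA (Tm Op (e j)) = cscale (- complex_of_real (pp j)) (Tm Op (e j))" .
    thus ?thesis unfolding OA_def f_def by (simp add: commutator_cscale cscale_cscale mult.commute)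
  qed
  have eigB: "commutator QB (OB (- fst (f j), snd (f j))) = cscale (- fst (f j)) (OB (- fst (f j), snd (f j)))"
    if "j \<in> J" for j
  proof -
    have "commutator QB (conjm (e j)) = conjm (commutator (conjm QB) (e j))"
      by (simp add: conjm_commutator conjm_conjm)
    also have "\<dots> = conjm (L (e j))" unfolding L_def by (simp add: conjm_herm[OF hB])
    also have "\<dots> = cscale (complex_of_real (pp j)) (conjm (e j))"
      by (subst Le[OF Jn[OF that]], subst conjm_scaleR, rule scaleR_cscale)
    finally show ?thesis unfolding OB_def f_def by simp
  qed
  have sq: "(complex_of_real (sqrt (mu j)))^2 = complex_of_real (mu j)" if "j \<in> J" for j
  proof -
    have "(sqrt (mu j))^2 = mu j" using Jmu[OF that] by simp
    thus ?thesis by (metis of_real_power)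
  qed
  have OAne: "OA (f j) \<noteq> 0" if "j \<in> J" for j
  proof -
    have "hs (OA (f j)) (OA (f j)) = 1"
      using Jmu[OF that] hsT[OF Jn[OF that] Jn[OF that]]
      unfolding OA_def f_def by (simp add: hs_cscale_left hs_cscale_right power2_eq_square[symmetric] sq[OF that])
    thus ?thesis by auto
  qed
  have orthA: "hs (OA (f j)) (OA (f j')) = (if j = j' then 1 else 0)" if "j \<in> J" "j' \<in> J" for j j'
  proof (cases "j = j'")
    case True
    show ?thesis
      using Jmu[OF that(1)] hsT[OF Jn[OF that(1)] Jn[OF that(1)]] True
      unfolding OA_def f_def by (simp add: hs_cscale_left hs_cscale_right power2_eq_square[symmetric] sq[OF that(1)] sq[OF that(2)])
  next
    case False
    show ?thesis
      using hsT[OF Jn[OF that(1)] Jn[OF that(2)]] False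
      unfolding OA_def f_def by (simp add: hs_cscale_left hs_cscale_right)
  qed
  have orthB: "hs (OB (- fst (f j), snd (f j))) (OB (- fst (f j'), snd (f j'))) = (if j = j' then 1 else 0)"
    if "j \<in> J" "j' \<in> J" for j j'
    using onF eF'[OF Jn[OF that(1)]] eF'[OF Jn[OF that(2)]] einj[OF Jn[OF that(1)] Jn[OF that(2)]]
    unfolding OB_def f_def by (simp add: hs_conjm)
  show ?thesis
  proof (intro exI conjI)
    show "finite K" by (rule finK)
    show "cscale (complex_of_real (1 / sqrt (Re (trace (adj Op ** Op))))) Op
      = (\<Sum>(q,j)\<in>K. cscale (complex_of_real (lam (q,j))) (kron (OA (q,j)) (OB (-q,j))))"
      using sumeq unfolding s_def by simp
    show "\<forall>(q,j)\<in>K. ad_eigenvalue QA q \<and> lam (q,j) \<ge> 0"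
      unfolding K_def
    proof (intro ballI)
      fix x assume "x \<in> f ` J"
      then obtain j where j: "j \<in> J" "x = f j" by blast
      have "ad_eigenvalue QA (fst (f j))" unfolding ad_eigenvalue_def using eigA[OF j(1)] OAne[OF j(1)] by blast
      moreover have "lam (f j) \<ge> 0" unfolding lam_def f_def using s_ge Jmu[OF j(1)] by simp
      ultimately show "case x of (q,j) \<Rightarrow> ad_eigenvalue QA q \<and> lam (q,j) \<ge> 0"
        using j(2) by (simp add: case_prod_beta)
    qed
    have orth: "\<forall>x\<in>K. \<forall>y\<in>K.
        trace (adj (OA x) ** OA y) = (if fst x = fst y \<and> snd x = snd y then 1 else 0) \<and>
        trace (adj (OB (- fst x, snd x)) ** OB (- fst y, snd y)) = (if fst x = fst y \<and> snd x = snd y then 1 else 0)"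
    proof (intro ballI)
      fix x y assume "x \<in> K" "y \<in> K"
      then obtain j j' where j: "j \<in> J" "x = f j" and j': "j' \<in> J" "y = f j'" unfolding K_def by blast
      have eq: "(fst (f j) = fst (f j') \<and> snd (f j) = snd (f j')) \<longleftrightarrow> j = j'" unfolding f_def by auto
      show "trace (adj (OA x) ** OA y) = (if fst x = fst y \<and> snd x = snd y then 1 else 0) \<and>
        trace (adj (OB (- fst x, snd x)) ** OB (- fst y, snd y)) = (if fst x = fst y \<and> snd x = snd y then 1 else 0)"
        unfolding j(2) j'(2) trace_adj_hs eq using orthA[OF j(1) j'(1)] orthB[OF j(1) j'(1)] by simp
    qed
    show "\<forall>(q,j)\<in>K. \<forall>(q',j')\<in>K.
               trace (adj (OA (q,j)) ** OA (q',j')) = (if q = q' \<and> j = j' then 1 else 0) \<and>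
               trace (adj (OB (-q,j)) ** OB (-q',j')) = (if q = q' \<and> j = j' then 1 else 0)"
      using orth by (simp add: case_prod_beta)
    show "\<forall>(q,j)\<in>K. commutator QA (OA (q,j)) = cscale q (OA (q,j)) \<and>
               commutator QB (OB (-q,j)) = cscale (-q) (OB (-q,j))"
      unfolding K_def
    proof (intro ballI)
      fix x assume "x \<in> f ` J"
      then obtain j where j: "j \<in> J" "x = f j" by blast
      show "case x of (q,j) \<Rightarrow> commutator QA (OA (q,j)) = cscale q (OA (q,j)) \<and>
               commutator QB (OB (-q,j)) = cscale (-q) (OB (-q,j))"
        using eigA[OF j(1)] eigB[OF j(1)] j(2) by (simp add: case_prod_beta)
    qed
  qed
qed

end
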